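(* Let $u,v\ge1$, $n\ge0$, $I\in\mathrm{Hilb}^n(\{x^uy^v=0\},0)$, let $N$ be an integer with $y^N\in I$, and put $W^k=I\cap(y^k)$ for $k\ge0$. Let $0\le k\le N-1$ and suppose $F=y^kx^i+y^{k+1}t(x,y)$ and $F'=y^{k+1}x^{i'}+y^{k+2}t'(x,y)$ (with $i,i'\ge0$, $t,t'\in\mathbb{C}[[x,y]]$) satisfy $W^k=W^{k+1}+(F)$ and $W^{k+1}=W^{k+2}+(F')$. Then $i\ge i'$.
   Context: $\mathrm{Hilb}^n(\{x^uy^v=0\},0)$ is the set of ideals $I\subset\mathbb{C}[[x,y]]$ with $\dim_{\mathbb{C}}\mathbb{C}[[x,y]]/I=n$, vanishing locus the origin, and $x^uy^v\in I$. *)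

theory Defs
  imports "HOL-Computational_Algebra.Formal_Power_Series"
begin

text \<open>The ring C[[x,y]] is realised as (C[[x]])[[y]], i.e. the type complex fps fps.
  The outer variable is y, the inner variable is x.\<close>

type_synonym ps2 = "complex fps fps"

definition Xv :: ps2 where "Xv = fps_const fps_X"
definition Yv :: ps2 where "Yv = fps_X"

definition cst :: "complex \<Rightarrow> ps2" where "cst c = fps_const (fps_const c)"

definition is_ideal :: "ps2 set \<Rightarrow> bool" where
  "is_ideal I \<longleftrightarrow> 0 \<in> I \<and> (\<forall>a\<in>I. \<forall>b\<in>I. a + b \<in> I) \<and> (\<forall>r. \<forall>a\<in>I. r * a \<in> I)"

definition principal :: "ps2 \<Rightarrow> ps2 set" where
  "principal f = {r * f | r. True}"

definition ideal_sum :: "ps2 set \<Rightarrow> ps2 set \<Rightarrow> ps2 set" where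
  "ideal_sum A B = {a + b | a b. a \<in> A \<and> b \<in> B}"

definition colength :: "ps2 set \<Rightarrow> nat \<Rightarrow> bool" where
  "colength I n \<longleftrightarrow> (\<exists>f :: nat \<Rightarrow> ps2.
      (\<forall>g. \<exists>c :: nat \<Rightarrow> complex. g - (\<Sum>j<n. cst (c j) * f j) \<in> I) \<and>
      (\<forall>c :: nat \<Rightarrow> complex. (\<Sum>j<n. cst (c j) * f j) \<in> I \<longrightarrow> (\<forall>j<n. c j = 0)))"

text \<open>Hilb^n({x^u y^v = 0}, 0). In the local ring C[[x,y]] every ideal of finite colength
  is supported at the origin, so the vanishing-locus condition is automatic.\<close>
definition Hilb :: "nat \<Rightarrow> nat \<Rightarrow> nat \<Rightarrow> ps2 set set" where
  "Hilb n u v = {I. is_ideal I \<and> colength I n \<and> Xv ^ u * Yv ^ v \<in> I}"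

definition Wk :: "ps2 set \<Rightarrow> nat \<Rightarrow> ps2 set" where
  "Wk I k = I \<inter> principal (Yv ^ k)"

end

theory Submission
  imports Defs
begin

lemma nthY: "fps_nth (Yv ^ m * f) n = (if n < m then 0 else fps_nth f (n - m))"
  unfolding Yv_def by (rule fps_X_power_mult_nth)

lemma XvP: "Xv ^ i = fps_const (fps_X ^ i)"
  unfolding Xv_def by (simp add: fps_const_power)

theorem mainTheorem10:
  fixes u v n N k i i' :: nat and I :: "ps2 set" and t t' :: ps2
  assumes "u \<ge> 1" and "v \<ge> 1"
    and "I \<in> Hilb n u v"
    and "Yv ^ N \<in> I"
    and "k + 1 \<le> N"
    and "Wk I k = ideal_sum (Wk I (k + 1)) (principal (Yv ^ k * Xv ^ i + Yv ^ (k + 1) * t))"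
    and "Wk I (k + 1) = ideal_sum (Wk I (k + 2)) (principal (Yv ^ (k + 1) * Xv ^ i' + Yv ^ (k + 2) * t'))"
  shows "i \<ge> i'"
proof (rule ccontr)
  assume lt: "\<not> i' \<le> i"
  define F where "F = Yv ^ k * Xv ^ i + Yv ^ (k + 1) * t"
  define G where "G = Xv ^ i' + Yv * t'"
  have F'eq: "Yv ^ (k + 1) * Xv ^ i' + Yv ^ (k + 2) * t' = Yv ^ (k+1) * G"
    unfolding G_def by (simp add: algebra_simps power_add)
  have idl: "is_ideal I" using assms(3) by (simp add: Hilb_def)
  have z: "0 \<in> Wk I (k+1)" using idl unfolding Wk_def is_ideal_def principal_def by auto
  have "F \<in> principal F" unfolding principal_def by (rule CollectI, rule exI[of _ 1]) simp
  hence "F \<in> Wk I k" using assms(6) z unfolding F_def ideal_sum_def by force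
  hence FI: "F \<in> I" unfolding Wk_def by auto
  have "Yv * F \<in> I" using idl FI unfolding is_ideal_def by auto
  moreover have "Yv * F \<in> principal (Yv ^ (k+1))" unfolding principal_def F_def
    by (rule CollectI, rule exI[of _ "Xv ^ i + Yv * t"]) (simp add: algebra_simps power_add)
  ultimately have "Yv * F \<in> Wk I (k+1)" unfolding Wk_def by auto
  then obtain a b where ab: "Yv * F = a + b" "a \<in> Wk I (k+2)"
      "b \<in> principal (Yv ^ (k+1) * G)"
    using assms(7) F'eq unfolding ideal_sum_def by auto
  then obtain s where s: "a = s * Yv ^ (k+2)" unfolding Wk_def principal_def by auto
  obtain r where r: "b = r * (Yv ^ (k+1) * G)" using ab(3) unfolding principal_def by auto
  have "fps_nth (Yv * F) (k+1) = fps_nth (Yv ^ (k+2) * s) (k+1) + fps_nth (Yv ^ (k+1) * (r * G)) (k+1)"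
    using ab(1) s r by (simp add: algebra_simps)
  also have "\<dots> = fps_nth r 0 * fps_nth G 0" unfolding nthY by simp
  also have "fps_nth G 0 = fps_X ^ i'" unfolding G_def XvP Yv_def by simp
  finally have "fps_nth (Yv ^ 1 * F) (k+1) = fps_nth r 0 * fps_X ^ i'" by simp
  moreover have "fps_nth (Yv ^ 1 * F) (k+1) = fps_X ^ i"
  proof -
    have "Yv ^ 1 * F = Yv ^ (k+1) * (Xv ^ i + Yv * t)" unfolding F_def
      by (simp add: algebra_simps power_add)
    hence "fps_nth (Yv ^ 1 * F) (k+1) = fps_nth (Xv ^ i + Yv * t) 0" by (simp only: nthY) simp
    also have "\<dots> = fps_X ^ i" unfolding XvP Yv_def by simp
    finally show ?thesis .
  qed
  ultimately have eq: "fps_X ^ i = fps_nth r 0 * (fps_X ^ i' :: complex fps)" by simp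
  have "fps_nth (fps_X ^ i :: complex fps) i = 1" by simp
  moreover have "fps_nth (fps_nth r 0 * (fps_X ^ i' :: complex fps)) i = 0"
    using lt by (simp add: mult.commute[of "fps_nth r 0"] fps_X_power_mult_nth)
  ultimately show False using eq by simp
qed

end
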